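(* Let $k\ge 2$. If $G$ is a finite simple graph admitting a closed neighborhood balanced $k$-coloring and $H$ is a finite simple graph admitting a neighborhood-balanced $k$-coloring, then the Cartesian product $G\,\square\,H$ admits a closed neighborhood balanced $k$-coloring.
   Context: For a vertex $v$, $N(v)=\{u: uv\in E\}$ and $N[v]=N(v)\cup\{v\}$. A neighborhood-balanced $k$-coloring of a graph is a map $c:V\to\{1,\dots,k\}$ such that for every vertex $v$ the numbers $|\{u\in N(v): c(u)=i\}|$, $i=1,\dots,k$, are all equal; a closed neighborhood balanced $k$-coloring is defined likewise with $N[v]$ in place of $N(v)$. The Cartesian product $G\,\square\,H$ has vertex set $V(G)\times V(H)$, with $(g,h)$ adjacent to $(g',h')$ iff ($g=g'$ and $hh'\in E(H)$) or ($h=h'$ and $gg'\in E(G)$). *)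

theory Defs
  imports Main
begin

definition simple_graph :: "'a set \<Rightarrow> ('a \<Rightarrow> 'a \<Rightarrow> bool) \<Rightarrow> bool" where
  "simple_graph V E \<longleftrightarrow> finite V \<and> (\<forall>u v. E u v \<longrightarrow> u \<in> V \<and> v \<in> V)
     \<and> (\<forall>u v. E u v \<longrightarrow> E v u) \<and> (\<forall>v. \<not> E v v)"

definition nbhd :: "'a set \<Rightarrow> ('a \<Rightarrow> 'a \<Rightarrow> bool) \<Rightarrow> 'a \<Rightarrow> 'a set" where
  "nbhd V E v = {u \<in> V. E u v}"

definition closed_nbhd :: "'a set \<Rightarrow> ('a \<Rightarrow> 'a \<Rightarrow> bool) \<Rightarrow> 'a \<Rightarrow> 'a set" where
  "closed_nbhd V E v = insert v (nbhd V E v)"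

definition nb_coloring :: "'a set \<Rightarrow> ('a \<Rightarrow> 'a \<Rightarrow> bool) \<Rightarrow> nat \<Rightarrow> ('a \<Rightarrow> nat) \<Rightarrow> bool" where
  "nb_coloring V E k c \<longleftrightarrow> (\<forall>v\<in>V. c v \<in> {1..k}) \<and>
     (\<forall>v\<in>V. \<forall>i\<in>{1..k}. \<forall>j\<in>{1..k}.
        card {u \<in> nbhd V E v. c u = i} = card {u \<in> nbhd V E v. c u = j})"

definition cnb_coloring :: "'a set \<Rightarrow> ('a \<Rightarrow> 'a \<Rightarrow> bool) \<Rightarrow> nat \<Rightarrow> ('a \<Rightarrow> nat) \<Rightarrow> bool" where
  "cnb_coloring V E k c \<longleftrightarrow> (\<forall>v\<in>V. c v \<in> {1..k}) \<and>
     (\<forall>v\<in>V. \<forall>i\<in>{1..k}. \<forall>j\<in>{1..k}.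
        card {u \<in> closed_nbhd V E v. c u = i} = card {u \<in> closed_nbhd V E v. c u = j})"

definition cart_prod_edges ::
  "'a set \<Rightarrow> ('a \<Rightarrow> 'a \<Rightarrow> bool) \<Rightarrow> 'b set \<Rightarrow> ('b \<Rightarrow> 'b \<Rightarrow> bool) \<Rightarrow> 'a \<times> 'b \<Rightarrow> 'a \<times> 'b \<Rightarrow> bool" where
  "cart_prod_edges VG EG VH EH x y \<longleftrightarrow>
     x \<in> VG \<times> VH \<and> y \<in> VG \<times> VH \<and>
     ((fst x = fst y \<and> EH (snd x) (snd y)) \<or> (snd x = snd y \<and> EG (fst x) (fst y)))"

end

theory Submission
  imports Defs "HOL-Number_Theory.Cong"
begin

lemma shift_unique:
  assumes k: "k \<ge> (1::nat)" and i: "i \<in> {1..k}"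
  shows "\<exists>t\<in>{1..k}. \<forall>x\<in>{1..k}. ((x + a) mod k + 1 = i \<longleftrightarrow> x = t)"
proof -
  let ?f = "\<lambda>x. (x + a) mod k + 1"
  have inj: "inj_on ?f {1..k}"
  proof (rule inj_onI)
    fix x y assume x: "x \<in> {1..k}" and y: "y \<in> {1..k}" and e: "?f x = ?f y"
    hence "(x + a) mod k = (y + a) mod k" by simp
    hence "x mod k = y mod k" using cong_add_rcancel_nat[of x a y k] by (simp add: cong_def)
    thus "x = y" using x y
    proof -
      have "x = k \<or> x < k" "y = k \<or> y < k" using x y by auto
      moreover have "x > 0" "y > 0" using x y by auto
      moreover have "x < k \<Longrightarrow> x mod k = x" "y < k \<Longrightarrow> y mod k = y" by simp_all
      moreover have "k mod k = 0" by simp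
      ultimately show ?thesis using \<open>x mod k = y mod k\<close> by (metis less_not_refl)
    qed
  qed
  have lt: "\<And>x. (x + a) mod k < k" using k by simp
  have img: "?f ` {1..k} \<subseteq> {1..k}" using lt by (auto simp: Suc_le_eq)
  have cd: "card (?f ` {1..k}) = card {1..k}" using inj by (rule card_image)
  have im: "?f ` {1..k} = {1..k}"
    by (rule card_subset_eq[OF finite_atLeastAtMost img cd])
  have "i \<in> ?f ` {1..k}" using i by (simp only: im)
  then obtain t where t0: "t \<in> {1..k}" "i = ?f t" by (rule imageE)
  hence t: "t \<in> {1..k}" "?f t = i" by simp_all
  show ?thesis
  proof (rule bexI[OF _ t(1)], intro ballI iffI)
    fix x assume "x \<in> {1..k}" "?f x = i"
    hence "?f x = ?f t" "x \<in> {1..k}" using t by simp_all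
    thus "x = t" using inj_onD[OF inj] t(1) by blast
  next
    fix x assume "x = t" thus "?f x = i" using t by simp
  qed
qed

lemma count_shift:
  assumes k: "k \<ge> (1::nat)" and i: "i \<in> {1..k}"
    and col: "\<forall>x\<in>S. c x \<in> {1..k}"
    and bal: "\<forall>j\<in>{1..k}. card {x\<in>S. c x = j} = card {x\<in>S. c x = 1}"
  shows "card {x\<in>S. (c x + a) mod k + 1 = i} = card {x\<in>S. c x = 1}"
proof -
  obtain t where t: "t \<in> {1..k}" "\<forall>x\<in>{1..k}. ((x + a) mod k + 1 = i \<longleftrightarrow> x = t)"
    using shift_unique[OF k i] by blast
  have "{x\<in>S. (c x + a) mod k + 1 = i} = {x\<in>S. c x = t}" using t col by auto
  moreover have "card {x\<in>S. c x = t} = card {x\<in>S. c x = 1}" using bal t(1) by blast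
  ultimately show ?thesis by simp
qed

lemma count_shift2:
  assumes k: "k \<ge> (1::nat)" and i: "i \<in> {1..k}"
    and col: "\<forall>x\<in>S. c x \<in> {1..k}"
    and bal: "\<forall>j\<in>{1..k}. card {x\<in>S. c x = j} = card {x\<in>S. c x = 1}"
  shows "card {x\<in>S. (a + c x) mod k + 1 = i} = card {x\<in>S. c x = 1}"
  using count_shift[OF assms, of a] by (simp add: add.commute)

theorem theorem2p25:
  fixes VG :: "'a set" and EG :: "'a \<Rightarrow> 'a \<Rightarrow> bool"
    and VH :: "'b set" and EH :: "'b \<Rightarrow> 'b \<Rightarrow> bool" and k :: nat
  assumes "k \<ge> 2"
    and "simple_graph VG EG" and "simple_graph VH EH"
    and "\<exists>c. cnb_coloring VG EG k c"
    and "\<exists>c. nb_coloring VH EH k c"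
  shows "\<exists>c. cnb_coloring (VG \<times> VH) (cart_prod_edges VG EG VH EH) k c"
proof -
  obtain cG where cG: "cnb_coloring VG EG k cG" using assms(4) by blast
  obtain cH where cH: "nb_coloring VH EH k cH" using assms(5) by blast
  have k1: "k \<ge> 1" using assms(1) by simp
  have one: "(1::nat) \<in> {1..k}" using k1 by simp
  have fG: "finite VG" and fH: "finite VH" and irH: "\<And>v. \<not> EH v v"
    using assms(2,3) unfolding simple_graph_def by auto
  define c where "c = (\<lambda>(g::'a, h::'b). (cG g + cH h) mod k + 1)"
  let ?V = "VG \<times> VH" and ?E = "cart_prod_edges VG EG VH EH"
  have main: "card {u \<in> closed_nbhd ?V ?E (g,h). c u = i}
      = card {x \<in> closed_nbhd VG EG g. cG x = 1} + card {y \<in> nbhd VH EH h. cH y = 1}"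
    if g: "g \<in> VG" and h: "h \<in> VH" and i: "i \<in> {1..k}" for g h i
  proof -
    have eq: "{u \<in> closed_nbhd ?V ?E (g,h). c u = i} =
      (\<lambda>x. (x,h)) ` {x \<in> closed_nbhd VG EG g. (cG x + cH h) mod k + 1 = i}
      \<union> (\<lambda>y. (g,y)) ` {y \<in> nbhd VH EH h. (cG g + cH y) mod k + 1 = i}"
      using g h unfolding closed_nbhd_def nbhd_def cart_prod_edges_def c_def by auto
    have disj: "(\<lambda>x. (x,h)) ` {x \<in> closed_nbhd VG EG g. (cG x + cH h) mod k + 1 = i}
      \<inter> (\<lambda>y. (g,y)) ` {y \<in> nbhd VH EH h. (cG g + cH y) mod k + 1 = i} = {}"
      using irH unfolding nbhd_def closed_nbhd_def by auto
    have fin1: "finite (closed_nbhd VG EG g)" using fG unfolding closed_nbhd_def nbhd_def by auto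
    have fin2: "finite (nbhd VH EH h)" using fH unfolding nbhd_def by auto
    have sub1: "closed_nbhd VG EG g \<subseteq> VG" using g unfolding closed_nbhd_def nbhd_def by auto
    have sub2: "nbhd VH EH h \<subseteq> VH" unfolding nbhd_def by auto
    have c1: "card {x \<in> closed_nbhd VG EG g. (cG x + cH h) mod k + 1 = i}
        = card {x \<in> closed_nbhd VG EG g. cG x = 1}"
      apply (rule count_shift[OF k1 i])
      using cG sub1 g one unfolding cnb_coloring_def by blast+
    have c2: "card {y \<in> nbhd VH EH h. (cG g + cH y) mod k + 1 = i}
        = card {y \<in> nbhd VH EH h. cH y = 1}"
      apply (rule count_shift2[OF k1 i])
      using cH sub2 h one unfolding nb_coloring_def by blast+
    show ?thesis unfolding eq
      apply (subst card_Un_disjoint)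
      using fin1 fin2 disj c1 c2 by (auto simp: card_image inj_on_def)
  qed
  have "cnb_coloring ?V ?E k c"
    unfolding cnb_coloring_def
  proof (intro conjI ballI)
    fix v assume "v \<in> ?V" thus "c v \<in> {1..k}" using k1 unfolding c_def
      by (auto simp: Suc_le_eq)
  next
    fix v i j assume v: "v \<in> ?V" and i: "i \<in> {1..k}" and j: "j \<in> {1..k}"
    obtain g h where "v = (g,h)" "g \<in> VG" "h \<in> VH" using v by auto
    thus "card {u \<in> closed_nbhd ?V ?E v. c u = i} = card {u \<in> closed_nbhd ?V ?E v. c u = j}"
      using main i j by simp
  qed
  thus ?thesis by blast
qed

end
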